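(* Let $\bar A=\{z\in\mathbb{C}:\operatorname{Re}z\ge0\}$. Let $Q_0$ be a function holomorphic in $\bar A$ and $Q_1$ a polynomial in one complex variable. If $Q_0(w)+vQ_1(w)\ne0$ for all $v,w\in\bar A$, then $Q_0(z)+Q_1'(z)\ne0$ for all $z\in\bar A$. *)

theory Defs
  imports "HOL-Complex_Analysis.Complex_Analysis" "HOL-Computational_Algebra.Polynomial"
begin

end

theory Submission
  imports Defs "HOL-Computational_Algebra.Fundamental_Theorem_Algebra"
begin

lemma logderiv_nonneg:
  fixes p :: "complex poly"
  assumes "\<forall>r. poly p r = 0 \<longrightarrow> Re r \<le> 0" "Re z \<ge> 0" "poly p z \<noteq> 0"
  shows "Re (poly (pderiv p) z / poly p z) \<ge> 0"
  using assms
proof (induction "degree p" arbitrary: p rule: less_induct)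
  case less
  show ?case
  proof (cases "degree p = 0")
    case True
    then have "pderiv p = 0" using pderiv_eq_0_iff by blast
    then show ?thesis by simp
  next
    case False
    then have "\<not> constant (poly p)" using constant_degree by metis
    then obtain r where r: "poly p r = 0" using fundamental_theorem_of_algebra by blast
    then obtain q where pq: "p = [:-r,1:] * q" using poly_eq_0_iff_dvd by (metis dvdE)
    have q0: "q \<noteq> 0" using False pq by auto
    have dq: "degree q < degree p" unfolding pq using q0 by (subst degree_mult_eq) auto
    have qroots: "\<forall>s. poly q s = 0 \<longrightarrow> Re s \<le> 0" using less.prems(1) pq by auto
    have qz: "poly q z \<noteq> 0" using less.prems(3) pq by auto
    have zr: "z - r \<noteq> 0" using less.prems(3) pq by auto
    have IH: "Re (poly (pderiv q) z / poly q z) \<ge> 0"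
      using less.hyps[OF dq qroots less.prems(2) qz] .
    have Rr: "Re r \<le> 0" using less.prems(1) r by blast
    have dp: "pderiv p = [:-r,1:] * pderiv q + q" unfolding pq pderiv_mult by (simp add: pderiv_pCons)
    have pd: "poly (pderiv p) z = (z - r) * poly (pderiv q) z + poly q z"
      unfolding dp poly_add poly_mult by (simp add: algebra_simps)
    have pp: "poly p z = (z - r) * poly q z" unfolding pq poly_mult by (simp add: algebra_simps)
    have "poly (pderiv p) z / poly p z = poly (pderiv q) z / poly q z + 1 / (z - r)"
      unfolding pd pp using qz zr by (simp add: field_simps)
    moreover have "Re (1 / (z - r)) \<ge> 0"
      using Rr less.prems(2) by (simp add: Re_divide)
    ultimately show ?thesis using IH by simp
  qed
qed


lemma infinite_ball_c: "(e::real)>0 \<Longrightarrow> infinite (ball (r::complex) e)"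
  using finite_imp_not_open by fastforce

theorem lemma2p1:
  fixes Q0 :: "complex \<Rightarrow> complex" and Q1 :: "complex poly"
  assumes "Q0 analytic_on {z. Re z \<ge> 0}"
    and "\<And>v w. Re v \<ge> 0 \<Longrightarrow> Re w \<ge> 0 \<Longrightarrow> Q0 w + v * poly Q1 w \<noteq> 0"
  shows "\<forall>z. Re z \<ge> 0 \<longrightarrow> Q0 z + poly (pderiv Q1) z \<noteq> 0"
proof (intro allI impI)
  fix z :: complex assume z: "0 \<le> Re z"
  have Q0nz: "Q0 w \<noteq> 0" if "Re w \<ge> 0" for w using assms(2)[of 0 w] that by auto
  show "Q0 z + poly (pderiv Q1) z \<noteq> 0"
  proof
    assume eq: "Q0 z + poly (pderiv Q1) z = 0"
    have Q1nz: "Q1 \<noteq> 0" using eq Q0nz[OF z] by auto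
    have roots: "Re r \<le> 0" if r: "poly Q1 r = 0" for r
    proof (rule ccontr)
      assume "\<not> Re r \<le> 0"
      then have rp: "Re r > 0" by simp
      define S where "S = ball r (Re r)"
      have SH: "Re w > 0" if "w \<in> S" for w
      proof -
        have "cmod (r - w) < Re r" using that by (simp add: S_def dist_norm)
        moreover have "\<bar>Re (r - w)\<bar> \<le> cmod (r - w)" by (rule abs_Re_le_cmod)
        ultimately show ?thesis by simp
      qed
      have Ssub: "S \<subseteq> {z. 0 \<le> Re z}"
      proof
        fix x assume "x \<in> S" then show "x \<in> {z. 0 \<le> Re z}" using SH[of x] by simp
      qed
      have Q0S: "Q0 w \<noteq> 0" if "w \<in> S" for w using Q0nz[of w] SH[OF that] by simp
      have holQ0: "Q0 holomorphic_on S"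
        using analytic_imp_holomorphic[OF assms(1)] Ssub by (rule holomorphic_on_subset)
      define phi where "phi = (\<lambda>w. poly Q1 w / Q0 w)"
      have holphi: "phi holomorphic_on S" unfolding phi_def
        by (intro holomorphic_intros holQ0 Q0S)
      have rS: "r \<in> S" using rp by (simp add: S_def)
      have phir: "phi r = 0" using r by (simp add: phi_def)
      have nc: "\<not> phi constant_on S"
      proof
        assume "phi constant_on S"
        then obtain c where c: "\<And>x. x \<in> S \<Longrightarrow> phi x = c" unfolding constant_on_def by blast
        have "poly Q1 w = 0" if "w \<in> S" for w
        proof -
          have "poly Q1 w / Q0 w = 0" using c[OF that] c[OF rS] phir by (simp add: phi_def)
          then show ?thesis using Q0S[OF that] by simp
        qed
        then have "S \<subseteq> {x. poly Q1 x = 0}" by blast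
        moreover have "infinite S" unfolding S_def using rp by (rule infinite_ball_c)
        ultimately show False using poly_roots_finite[OF Q1nz] by (metis finite_subset)
      qed
      have "open (phi ` S)"
        by (rule open_mapping_thm[OF holphi _ _ _ _ nc]) (simp_all add: S_def)
      moreover have "0 \<in> phi ` S" using rS phir by (metis image_eqI)
      ultimately obtain e where e: "e > 0" "ball 0 e \<subseteq> phi ` S"
        using open_contains_ball by blast
      have "- complex_of_real (e/2) \<in> ball 0 e" using e by (simp add: dist_norm)
      then have "- complex_of_real (e/2) \<in> phi ` S" using e(2) by (rule subsetD[rotated])
      then obtain w where w: "w \<in> S" and pw: "- complex_of_real (e/2) = phi w" by (rule imageE)
      have "poly Q1 w = phi w * Q0 w" using Q0S[OF w] by (simp add: phi_def)
      then have p1: "poly Q1 w = - complex_of_real (e/2) * Q0 w" by (simp only: pw)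
      have c1: "complex_of_real (2/e) * complex_of_real (e/2) = 1"
        using e(1) by (simp flip: of_real_mult)
      have "Q0 w + complex_of_real (2/e) * poly Q1 w
          = Q0 w - (complex_of_real (2/e) * complex_of_real (e/2)) * Q0 w"
        unfolding p1 by (simp only: mult_minus_left mult_minus_right mult.assoc diff_conv_add_uminus)
      also have "\<dots> = 0" unfolding c1 by simp
      finally have z0: "Q0 w + complex_of_real (2/e) * poly Q1 w = 0" .
      have "Re (complex_of_real (2/e)) \<ge> 0" using e by simp
      moreover have "Re w \<ge> 0" using SH[OF w] by simp
      ultimately show False using assms(2) z0 by blast
    qed
    show False
    proof (cases "poly Q1 z = 0")
      case False
      have "Re (poly (pderiv Q1) z / poly Q1 z) \<ge> 0"
        using logderiv_nonneg[of Q1 z] roots z False by blast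
      moreover have "Q0 z + (poly (pderiv Q1) z / poly Q1 z) * poly Q1 z = 0"
        using eq False by simp
      ultimately show False using assms(2) z by blast
    next
      case True
      then obtain q where pq: "Q1 = [:-z,1:] * q" using poly_eq_0_iff_dvd by (metis dvdE)
      have dp: "pderiv Q1 = [:-z,1:] * pderiv q + q" unfolding pq pderiv_mult by (simp add: pderiv_pCons)
      have pd: "poly (pderiv Q1) z = poly q z"
        unfolding dp poly_add poly_mult by simp
      have pw: "poly Q1 w = (w - z) * poly q w" for w unfolding pq poly_mult by (simp add: algebra_simps)
      have "Q0 z + poly q z = 0" using eq pd by simp
      then have qz: "poly q z = - Q0 z" by (metis add_eq_0_iff)
      then have qz0: "poly q z \<noteq> 0" using Q0nz[OF z] by simp
      define g where "g = (\<lambda>t::real. - Q0 (z + of_real t) / poly q (z + of_real t))"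
      have g0: "g 0 = 1" using qz qz0 by (simp add: g_def)
      have cQ0: "isCont Q0 z"
        by (rule analytic_at_imp_isCont) (use assms(1) z analytic_on_subset in blast)
      have hQ: "isCont (\<lambda>t::real. Q0 (z + of_real t)) 0"
        by (rule isCont_o2[where f="\<lambda>t::real. z + of_real t"]) (auto intro!: continuous_intros simp: cQ0)
      have hq: "isCont (\<lambda>t::real. poly q (z + of_real t)) 0"
        by (intro continuous_intros)
      have "isCont g 0" unfolding g_def
        by (intro continuous_intros hQ hq) (simp add: qz0)
      then obtain d where d: "d > 0" "\<And>t. dist t 0 < d \<Longrightarrow> dist (g t) (g 0) < 1"
        unfolding continuous_at_eps_delta by (meson zero_less_one)
      define t where "t = d/2"
      have t: "t > 0" "dist t 0 < d" using d by (auto simp: t_def)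
      have "cmod (g t - 1) < 1" using d(2)[OF t(2)] g0 by (simp add: dist_norm)
      moreover have "\<bar>Re (g t - 1)\<bar> \<le> cmod (g t - 1)" by (rule abs_Re_le_cmod)
      ultimately have Rg: "Re (g t) > 0" by simp
      define w where "w = z + of_real t"
      have Rw: "Re w \<ge> 0" using z t by (simp add: w_def)
      have qw: "poly q w \<noteq> 0"
      proof
        assume "poly q w = 0"
        then have "g t = 0" by (simp add: g_def w_def)
        then show False using Rg by simp
      qed
      define v where "v = g t / of_real t"
      have Rv: "Re v \<ge> 0" using Rg t by (simp add: v_def Re_divide_of_real less_imp_le)
      have wz: "w - z = of_real t" by (simp add: w_def)
      have gt: "g t = - Q0 w / poly q w" by (simp add: g_def w_def)
      have "v * poly Q1 w = g t * poly q w" unfolding v_def pw wz using t(1) by simp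
      also have "\<dots> = - Q0 w" unfolding gt using qw by simp
      finally have "Q0 w + v * poly Q1 w = 0" by simp
      then show False using assms(2)[OF Rv Rw] by blast
    qed
  qed
qed

end
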